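(* Let $\lambda>0$ and let $\{c_k\}_{k\ge1}$ be i.i.d. random variables whose common distribution is absolutely continuous on $[0,1]$ with almost everywhere positive and uniformly bounded density. Let $l_k=e^{-\lambda k}$. Then, almost surely, assumptions (A1), (A2), (A3) below are satisfied.
   Context: Notation: $\mathcal{A}_n=\{n,\dots,2n-1\}$, $\mathcal{A}_{n,q}=\mathcal{A}_n\cup\mathcal{A}_{2n}\cup\cdots\cup\mathcal{A}_{2^qn}$. (A1) There is $\phi\in L^1([0,1],dx)$, $\phi>0$ a.e., with $\frac{1}{\#\mathcal{A}_n}\sum_{k\in\mathcal{A}_n}f(c_k)\to\int_0^1 f\phi\,dx$ for every $f\in C([0,1])$. There is a sequence of integers $q(n)\to\infty$ such that: (A2) for every $\varepsilon>0$ there is $\delta>0$ such that for all large $n$ and all $n',n''\in\{n,2n,\dots,2^{q(n)}n\}$, $\frac{1}{\#(\mathcal{A}_{n'}\times\mathcal{A}_{n''})}\sum_{i\in\mathcal{A}_{n'},j\in\mathcal{A}_{n''},\,i\neq j,\,|c_i-c_j|<\delta}(-\log|c_i-c_j|)<\varepsilon$; (A3) for every $\varepsilon>0$, for all large $n$ and all $i\ne j$ in $\mathcal{A}_{n,q(n)}$, $\frac{l_i+l_j}{2|c_i-c_j|}<\varepsilon$. *)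

theory Defs
  imports "HOL-Probability.Probability"
begin

definition blockA :: "nat \<Rightarrow> nat set" where
  "blockA n = {n..<2*n}"

definition blockAq :: "nat \<Rightarrow> nat \<Rightarrow> nat set" where
  "blockAq n q = (\<Union>j\<in>{0..q}. blockA (2^j * n))"

definition assumptionA1 :: "(nat \<Rightarrow> real) \<Rightarrow> bool" where
  "assumptionA1 c \<longleftrightarrow>
     (\<exists>\<phi>::real \<Rightarrow> real.
        set_integrable lborel {0..1} \<phi> \<and>
        (AE x in lborel. x \<in> {0..1} \<longrightarrow> \<phi> x > 0) \<and>
        (\<forall>f. continuous_on {0..1} f \<longrightarrow>
           (\<lambda>n. (1 / real (card (blockA n))) * (\<Sum>k\<in>blockA n. f (c k)))
             \<longlonglongrightarrow> (LINT x:{0..1}|lborel. f x * \<phi> x)))"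

definition assumptionA2 :: "(nat \<Rightarrow> nat) \<Rightarrow> (nat \<Rightarrow> real) \<Rightarrow> bool" where
  "assumptionA2 q c \<longleftrightarrow>
     (\<forall>\<epsilon>>0. \<exists>\<delta>>0. \<forall>\<^sub>F n in sequentially.
        \<forall>n'\<in>{2^j * n | j. j \<le> q n}. \<forall>n''\<in>{2^j * n | j. j \<le> q n}.
          (1 / real (card (blockA n' \<times> blockA n''))) *
            (\<Sum>(i,j)\<in>{(i,j). i \<in> blockA n' \<and> j \<in> blockA n'' \<and> i \<noteq> j \<and> \<bar>c i - c j\<bar> < \<delta>}.
               - ln \<bar>c i - c j\<bar>) < \<epsilon>)"

definition assumptionA3 :: "(nat \<Rightarrow> nat) \<Rightarrow> (nat \<Rightarrow> real) \<Rightarrow> (nat \<Rightarrow> real) \<Rightarrow> bool" where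
  "assumptionA3 q c l \<longleftrightarrow>
     (\<forall>\<epsilon>>0. \<forall>\<^sub>F n in sequentially.
        \<forall>i\<in>blockAq n (q n). \<forall>j\<in>blockAq n (q n). i \<noteq> j \<longrightarrow>
          (l i + l j) / (2 * \<bar>c i - c j\<bar>) < \<epsilon>)"

end

theory Submission
  imports Defs "HOL-Real_Asymp.Real_Asymp"
begin

definition gapOK :: "(nat \<Rightarrow> real) \<Rightarrow> nat \<Rightarrow> nat \<Rightarrow> bool" where
  "gapOK x Q n \<longleftrightarrow> (\<forall>i\<in>{n..<2^(Q+1)*n}. \<forall>j\<in>{n..<2^(Q+1)*n}. i \<noteq> j \<longrightarrow> 1 / real n ^ 4 \<le> \<bar>x i - x j\<bar>)"

definition polyr :: "rat list \<Rightarrow> real \<Rightarrow> real" where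
  "polyr rs x = (\<Sum>i<length rs. real_of_rat (rs!i) * x^i)"

lemma polyr_meas[measurable]: "polyr rs \<in> borel_measurable borel"
  unfolding polyr_def by measurable

lemma polyr_bound: "x \<in> {0..1} \<Longrightarrow> \<bar>polyr rs x\<bar> \<le> (\<Sum>i<length rs. \<bar>real_of_rat (rs!i)\<bar>)"
  unfolding polyr_def
proof -
  assume x: "x \<in> {0..1}"
  have "\<bar>\<Sum>i<length rs. real_of_rat (rs!i) * x^i\<bar> \<le> (\<Sum>i<length rs. \<bar>real_of_rat (rs!i) * x^i\<bar>)"
    by (rule sum_abs)
  also have "\<dots> \<le> (\<Sum>i<length rs. \<bar>real_of_rat (rs!i)\<bar>)"
  proof (intro sum_mono)
    fix i
    have "\<bar>x^i\<bar> \<le> 1" using x by (simp add: power_le_one power_abs[symmetric])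
    then show "\<bar>real_of_rat (rs!i) * x^i\<bar> \<le> \<bar>real_of_rat (rs!i)\<bar>"
      by (simp add: abs_mult mult_left_le)
  qed
  finally show "\<bar>\<Sum>i<length rs. real_of_rat (rs!i) * x^i\<bar> \<le> (\<Sum>i<length rs. \<bar>real_of_rat (rs!i)\<bar>)" .
qed

lemma poly_approx:
  assumes f: "continuous_on {0..1} f" and e: "e > 0"
  shows "\<exists>rs. \<forall>x\<in>{0..1}. \<bar>f x - polyr rs x\<bar> \<le> e"
proof -
  obtain g where g: "polynomial_function g" "\<forall>x\<in>{0..1::real}. norm (f x - g x) < e/2"
    using Stone_Weierstrass_polynomial_function[OF compact_Icc f, of "e/2"] e by auto
  then have "real_polynomial_function g" by (simp add: real_polynomial_function_eq)
  then obtain a N where gN: "g = (\<lambda>x. \<Sum>i\<le>N. a i * x^i)"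
    by (auto simp: real_polynomial_function_iff_sum)
  define \<eta> where "\<eta> = e / (2 * (real N + 1))"
  have \<eta>: "\<eta> > 0" using e by (simp add: \<eta>_def)
  have "\<forall>i. \<exists>r::rat. \<bar>a i - real_of_rat r\<bar> < \<eta>"
  proof
    fix i
    obtain r where "r \<in> \<rat>" "a i - \<eta> < r" "r < a i + \<eta>"
      using Rats_dense_in_real[of "a i - \<eta>" "a i + \<eta>"] \<eta> by auto
    then show "\<exists>r::rat. \<bar>a i - real_of_rat r\<bar> < \<eta>"
      by (metis Rats_cases abs_diff_less_iff add.commute diff_less_eq less_diff_eq)
  qed
  then obtain R where R: "\<And>i. \<bar>a i - real_of_rat (R i)\<bar> < \<eta>" by metis
  define rs where "rs = map R [0..<Suc N]"
  have prs: "polyr rs x = (\<Sum>i\<le>N. real_of_rat (R i) * x^i)" for x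
  proof -
    have "(\<Sum>i<length rs. real_of_rat (rs!i) * x^i) = (\<Sum>i<Suc N. real_of_rat (R i) * x^i)"
      unfolding rs_def by (intro sum.cong) (auto simp del: upt_Suc)
    then show ?thesis unfolding polyr_def by (simp add: lessThan_Suc_atMost)
  qed
  show ?thesis
  proof (intro exI ballI)
    fix x :: real assume x: "x \<in> {0..1}"
    have "\<bar>g x - polyr rs x\<bar> = \<bar>\<Sum>i\<le>N. (a i - real_of_rat (R i)) * x^i\<bar>"
      by (simp add: gN prs sum_subtractf left_diff_distrib)
    also have "\<dots> \<le> (\<Sum>i\<le>N. \<bar>(a i - real_of_rat (R i)) * x^i\<bar>)" by (rule sum_abs)
    also have "\<dots> \<le> (\<Sum>i\<le>N. \<eta>)"
    proof (intro sum_mono)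
      fix i
      have "\<bar>x^i\<bar> \<le> 1" using x by (simp add: power_le_one)
      then have "\<bar>(a i - real_of_rat (R i)) * x^i\<bar> \<le> \<bar>a i - real_of_rat (R i)\<bar>"
        by (simp add: abs_mult mult_left_le)
      then show "\<bar>(a i - real_of_rat (R i)) * x^i\<bar> \<le> \<eta>" using R[of i] by linarith
    qed
    also have "\<dots> = e/2" by (simp add: \<eta>_def field_simps)
    finally have "\<bar>g x - polyr rs x\<bar> \<le> e/2" .
    moreover have "\<bar>f x - g x\<bar> < e/2" using g(2) x by auto
    ultimately show "\<bar>f x - polyr rs x\<bar> \<le> e" by linarith
  qed
qed

locale setting = prob_space M for M :: "'a measure" +
  fixes c :: "nat \<Rightarrow> 'a \<Rightarrow> real" and \<rho> :: "real \<Rightarrow> real" and C :: real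
  assumes c_meas[measurable]: "\<And>k. c k \<in> borel_measurable M"
  and indep: "indep_vars (\<lambda>_. borel) c UNIV"
  and rho_meas[measurable]: "\<rho> \<in> borel_measurable borel"
  and rho_nn: "\<And>x. \<rho> x \<ge> 0"
  and rho_out: "\<And>x. x \<notin> {0..1} \<Longrightarrow> \<rho> x = 0"
  and rho_le: "\<And>x. \<rho> x \<le> C"
  and distr: "\<And>k. distributed M lborel (c k) (\<lambda>x. ennreal (\<rho> x))"
begin

lemma C_nn: "C \<ge> 0" using rho_nn[of 0] rho_le[of 0] by linarith

lemma emeasure_c_le:
  assumes A: "A \<in> sets borel"
  shows "emeasure M (c k -` A \<inter> space M) \<le> ennreal C * emeasure lborel A"
proof -
  have "emeasure M (c k -` A \<inter> space M) = (\<integral>\<^sup>+x. ennreal (\<rho> x) * indicator A x \<partial>lborel)"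
    using distributed_emeasure[OF distr[of k]] A by simp
  also have "\<dots> \<le> (\<integral>\<^sup>+x. ennreal C * indicator A x \<partial>lborel)"
    by (intro nn_integral_mono mult_right_mono) (auto intro: ennreal_leI rho_le)
  also have "\<dots> = ennreal C * emeasure lborel A"
    using A by (simp add: nn_integral_cmult_indicator)
  finally show ?thesis .
qed

lemma prob_c_le:
  assumes A: "A \<in> sets borel" and fin: "emeasure lborel A < \<infinity>"
  shows "prob {\<omega>\<in>space M. c k \<omega> \<in> A} \<le> C * measure lborel A"
proof -
  have "ennreal (prob {\<omega>\<in>space M. c k \<omega> \<in> A}) = emeasure M (c k -` A \<inter> space M)"
    by (simp add: emeasure_eq_measure Int_def vimage_def conj_commute)
  also have "\<dots> \<le> ennreal C * emeasure lborel A" by (rule emeasure_c_le[OF A])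
  also have "emeasure lborel A = ennreal (measure lborel A)"
    using fin by (simp add: emeasure_eq_ennreal_measure less_top)
  also have "ennreal C * ennreal (measure lborel A) = ennreal (C * measure lborel A)"
    using C_nn by (simp add: ennreal_mult)
  finally show ?thesis using C_nn by (simp add: ennreal_le_iff)
qed

lemma AE_c_in01: "AE \<omega> in M. \<forall>k. c k \<omega> \<in> {0..1}"
proof -
  have "AE \<omega> in M. c k \<omega> \<in> {0..1}" for k
  proof -
    have "emeasure M (c k -` (- {0..1}) \<inter> space M) = (\<integral>\<^sup>+x. ennreal (\<rho> x) * indicator (- {0..1}) x \<partial>lborel)"
      using distributed_emeasure[OF distr[of k]] by simp
    also have "(\<lambda>x. ennreal (\<rho> x) * indicator (- {0..1}) x) = (\<lambda>x. 0)"
      by (rule ext) (auto simp: rho_out split: split_indicator)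
    finally have "c k -` (- {0..1}) \<inter> space M \<in> null_sets M" by (auto simp: null_sets_def)
    then show ?thesis by (rule AE_I') auto
  qed
  then show ?thesis by (simp add: AE_all_countable)
qed

lemma indep_pair:
  assumes "i \<noteq> j"
  shows "indep_var borel (c i) borel (c j)"
proof -
  have "indep_var (PiM {i} (\<lambda>_. borel)) (\<lambda>\<omega>. restrict (\<lambda>k. c k \<omega>) {i})
                  (PiM {j} (\<lambda>_. borel)) (\<lambda>\<omega>. restrict (\<lambda>k. c k \<omega>) {j})"
    using assms by (intro indep_var_restrict[OF indep]) auto
  then have "indep_var borel (\<lambda>\<omega>. (\<lambda>f. f i) (restrict (\<lambda>k. c k \<omega>) {i}))
                  borel (\<lambda>\<omega>. (\<lambda>f. f j) (restrict (\<lambda>k. c k \<omega>) {j}))"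
    by (rule indep_var_compose[unfolded comp_def]) auto
  then show ?thesis by simp
qed

lemma prob_pair_close:
  assumes ij: "i \<noteq> j" and s: "s \<ge> 0"
  shows "prob {\<omega>\<in>space M. \<bar>c i \<omega> - c j \<omega>\<bar> < s} \<le> 2 * C * s"
proof -
  let ?Di = "distr M borel (c i)" and ?Dj = "distr M borel (c j)"
  have eq: "?Di \<Otimes>\<^sub>M ?Dj = distr M (borel \<Otimes>\<^sub>M borel) (\<lambda>\<omega>. (c i \<omega>, c j \<omega>))"
    using indep_var_distribution_eq indep_pair[OF ij] by auto
  interpret Di: prob_space ?Di by (rule prob_space_distr) simp
  interpret Dj: prob_space ?Dj by (rule prob_space_distr) simp
  let ?S = "{p::real\<times>real. \<bar>fst p - snd p\<bar> < s}"
  have "{p \<in> space (borel \<Otimes>\<^sub>M borel). \<bar>fst p - snd p\<bar> < (s::real)} \<in> sets (borel \<Otimes>\<^sub>M borel)"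
    by measurable
  then have S: "?S \<in> sets (borel \<Otimes>\<^sub>M borel)" by (simp add: space_pair_measure)
  have "emeasure M {\<omega>\<in>space M. \<bar>c i \<omega> - c j \<omega>\<bar> < s}
        = emeasure (distr M (borel \<Otimes>\<^sub>M borel) (\<lambda>\<omega>. (c i \<omega>, c j \<omega>))) ?S"
    using S by (subst emeasure_distr) (auto intro!: arg_cong[where f="emeasure M"])
  also have "\<dots> = emeasure (?Di \<Otimes>\<^sub>M ?Dj) ?S" using eq by simp
  also have "\<dots> = (\<integral>\<^sup>+x. emeasure ?Dj (Pair x -` ?S) \<partial>?Di)"
    using S by (intro Dj.emeasure_pair_measure_alt) simp
  also have "\<dots> \<le> (\<integral>\<^sup>+x. ennreal (2 * C * s) \<partial>?Di)"
  proof (intro nn_integral_mono)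
    fix x
    have "Pair x -` ?S = {x - s <..< x + s}" by auto
    then have "emeasure ?Dj (Pair x -` ?S) = emeasure M (c j -` {x - s <..< x + s} \<inter> space M)"
      by (simp add: emeasure_distr)
    also have "\<dots> \<le> ennreal C * emeasure lborel {x - s <..< x + s}"
      by (rule emeasure_c_le) simp
    also have "\<dots> = ennreal (2 * C * s)"
      using s C_nn by (simp add: ennreal_mult[symmetric] algebra_simps)
    finally show "emeasure ?Dj (Pair x -` ?S) \<le> ennreal (2 * C * s)" .
  qed
  also have "\<dots> = ennreal (2 * C * s)" using Di.emeasure_space_1 by simp
  finally show ?thesis using s C_nn by (simp add: emeasure_eq_measure ennreal_le_iff)
qed

lemma BC_wrap:
  assumes B: "\<And>n. B n \<in> events" and S: "summable (\<lambda>n. prob (B n))"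
    and Q: "\<And>n \<omega>. \<omega> \<in> space M \<Longrightarrow> \<omega> \<notin> B n \<Longrightarrow> Q n \<omega>"
  shows "AE \<omega> in M. eventually (\<lambda>n. Q n \<omega>) sequentially"
proof -
  have "AE \<omega> in M. eventually (\<lambda>n. \<omega> \<in> space M - B n) sequentially"
    by (rule borel_cantelli_AE1) (use B S in \<open>auto simp: emeasure_eq_measure\<close>)
  then show ?thesis
    by (rule AE_mp[OF _ AE_I2]) (auto elim!: eventually_mono intro: Q)
qed

lemma gap_AE: "AE \<omega> in M. eventually (\<lambda>n. gapOK (\<lambda>k. c k \<omega>) Q n) sequentially"
proof -
  define R where "R n = {n..<2^(Q+1)*n}" for n :: nat
  define P where "P n = {p \<in> R n \<times> R n. fst p \<noteq> snd p}" for n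
  define B where "B n = (\<Union>p\<in>P n. {\<omega>\<in>space M. \<bar>c (fst p) \<omega> - c (snd p) \<omega>\<bar> < 1 / real n ^ 4})" for n
  define K :: real where "K = 4^(Q+1) * (2 * C)"
  have finP: "finite (P n)" for n unfolding P_def R_def by (rule finite_subset[of _ "R n \<times> R n"]) (auto simp: R_def)
  have Bev: "B n \<in> events" for n
    unfolding B_def using finP by (intro sets.finite_UN) auto
  have bound: "prob (B n) \<le> K * inverse (real n ^ 2)" for n
  proof (cases "n = 0")
    case True
    then have "P n = {}" by (auto simp: P_def R_def)
    then show ?thesis by (simp add: B_def True)
  next
    case False
    have "prob (B n) \<le> (\<Sum>p\<in>P n. prob {\<omega>\<in>space M. \<bar>c (fst p) \<omega> - c (snd p) \<omega>\<bar> < 1 / real n ^ 4})"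
      unfolding B_def using finP by (intro finite_measure_subadditive_finite) auto
    also have "\<dots> \<le> (\<Sum>p\<in>P n. 2 * C * (1 / real n ^ 4))"
      by (intro sum_mono prob_pair_close) (auto simp: P_def)
    also have "\<dots> = real (card (P n)) * (2 * C * (1 / real n ^ 4))" by simp
    also have "\<dots> \<le> real ((2^(Q+1)*n)^2) * (2 * C * (1 / real n ^ 4))"
    proof (intro mult_right_mono)
      have "card (P n) \<le> card (R n \<times> R n)" unfolding P_def
        by (rule card_mono) (auto simp: R_def)
      also have "\<dots> \<le> (2^(Q+1)*n)^2"
      proof -
        have "card (R n) \<le> 2^(Q+1)*n" by (simp add: R_def)
        then have "card (R n) * card (R n) \<le> (2^(Q+1)*n) * (2^(Q+1)*n)" by (intro mult_mono) auto
        then show ?thesis by (simp add: card_cartesian_product power2_eq_square)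
      qed
      finally show "real (card (P n)) \<le> real ((2^(Q+1)*n)^2)" by linarith
    qed (use C_nn in auto)
    also have "\<dots> = K * inverse (real n ^ 2)"
    proof -
      have e: "((2::real)^(Q+1))^2 = 4^(Q+1)"
        by (metis power_mult_distrib power2_eq_square num_double numeral_times_numeral)
      have "real ((2^(Q+1)*n)^2) = (2^(Q+1))^2 * real n ^ 2" by (simp add: power_mult_distrib)
      also have "\<dots> = 4^(Q+1) * real n ^ 2" by (simp only: e)
      finally show ?thesis using False by (simp add: K_def field_simps power2_eq_square power4_eq_xxxx)
    qed
    finally show ?thesis .
  qed
  have "summable (\<lambda>n. prob (B n))"
  proof (rule summable_comparison_test)
    show "\<exists>N. \<forall>n\<ge>N. norm (prob (B n)) \<le> K * inverse (real n ^ 2)" using bound by auto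
    show "summable (\<lambda>n. K * inverse (real n ^ 2))"
      by (intro summable_mult inverse_power_summable) auto
  qed
  then show ?thesis
  proof (rule BC_wrap[OF Bev])
    fix n \<omega> assume "\<omega> \<in> space M" "\<omega> \<notin> B n"
    then show "gapOK (\<lambda>k. c k \<omega>) Q n"
      unfolding gapOK_def B_def P_def R_def by force
  qed
qed

lemma card_blockA[simp]: "card (blockA n) = n" by (simp add: blockA_def)
lemma finite_blockA[simp]: "finite (blockA n)" by (simp add: blockA_def)

lemma expect_g:
  assumes g[measurable]: "g \<in> borel_measurable borel"
  shows "expectation (\<lambda>\<omega>. g (c k \<omega>)) = (\<integral>x. \<rho> x * g x \<partial>lborel)"
  using distributed_integral[OF distr[of k], of g] rho_nn by simp

lemma hoeff:
  assumes g[measurable]: "g \<in> borel_measurable borel"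
    and ab: "\<And>x. x \<in> {0..1} \<Longrightarrow> g x \<in> {a..b}" "a < b" and t: "t \<ge> 0" and n: "n > 0"
  shows "prob {\<omega>\<in>space M. (\<Sum>k\<in>blockA n. g (c k \<omega>)) \<ge> real n * (\<integral>x. \<rho> x * g x \<partial>lborel) + real n * t}
           \<le> exp (-2 * real n * t^2 / (b-a)^2)"
    and "prob {\<omega>\<in>space M. \<bar>(\<Sum>k\<in>blockA n. g (c k \<omega>)) - real n * (\<integral>x. \<rho> x * g x \<partial>lborel)\<bar> \<ge> real n * t}
           \<le> 2 * exp (-2 * real n * t^2 / (b-a)^2)"
proof -
  interpret H: Hoeffding_ineq M "blockA n" "\<lambda>k \<omega>. g (c k \<omega>)" "\<lambda>_. a" "\<lambda>_. b" "real n * (\<integral>x. \<rho> x * g x \<partial>lborel)"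
  proof unfold_locales
    show "finite (blockA n)" by simp
    show "indep_vars (\<lambda>_. borel) (\<lambda>k \<omega>. g (c k \<omega>)) (blockA n)"
      by (rule indep_vars_compose2[OF indep_vars_subset[OF indep]]) auto
    fix i show "AE x in M. g (c i x) \<in> {a..b}"
      using AE_c_in01 by eventually_elim (use ab in auto)
  qed (simp add: expect_g)
  have d: "(\<Sum>i\<in>blockA n. (b - a)\<^sup>2) = real n * (b-a)^2" by simp
  have d0: "(\<Sum>i\<in>blockA n. (b - a)\<^sup>2) > 0" using ab n by simp
  have ex: "-2 * (real n * t)\<^sup>2 / (real n * (b-a)^2) = -2 * real n * t^2 / (b-a)^2"
    using n ab(2) by (simp add: power_mult_distrib divide_simps) (simp add: power2_eq_square)
  show "prob {\<omega>\<in>space M. (\<Sum>k\<in>blockA n. g (c k \<omega>)) \<ge> real n * (\<integral>x. \<rho> x * g x \<partial>lborel) + real n * t}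
           \<le> exp (-2 * real n * t^2 / (b-a)^2)"
    using H.Hoeffding_ineq_ge[of "real n * t", OF _ d0] t unfolding d ex by simp
  show "prob {\<omega>\<in>space M. \<bar>(\<Sum>k\<in>blockA n. g (c k \<omega>)) - real n * (\<integral>x. \<rho> x * g x \<partial>lborel)\<bar> \<ge> real n * t}
           \<le> 2 * exp (-2 * real n * t^2 / (b-a)^2)"
    using H.Hoeffding_ineq_abs_ge[of "real n * t", OF _ d0] t unfolding d ex by simp
qed

lemma summable_exp_lin:
  assumes "\<kappa> > 0" shows "summable (\<lambda>n::nat. K * exp (- \<kappa> * real n))"
proof -
  have "(\<lambda>n::nat. exp (- \<kappa> * real n)) = (\<lambda>n. exp (- \<kappa>) ^ n)"
    by (rule ext) (simp add: exp_of_nat_mult[symmetric] mult.commute)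
  moreover have "summable (\<lambda>n. exp (- \<kappa>) ^ n)"
    by (rule summable_geometric) (use assms in simp)
  ultimately have "summable (\<lambda>n::nat. exp (- \<kappa> * real n))" by simp
  then show ?thesis by (rule summable_mult)
qed

lemma block_avg_AE:
  assumes g[measurable]: "g \<in> borel_measurable borel"
    and ab: "\<And>x. x \<in> {0..1} \<Longrightarrow> g x \<in> {a..b}" "a < b"
  shows "AE \<omega> in M. (\<lambda>n. (1 / real (card (blockA n))) * (\<Sum>k\<in>blockA n. g (c k \<omega>)))
            \<longlonglongrightarrow> (\<integral>x. \<rho> x * g x \<partial>lborel)"
proof -
  define E where "E = (\<integral>x. \<rho> x * g x \<partial>lborel)"
  have ev: "AE \<omega> in M. eventually (\<lambda>n. \<bar>(1 / real (card (blockA n))) * (\<Sum>k\<in>blockA n. g (c k \<omega>)) - E\<bar> < 1 / (real m + 1)) sequentially" for m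
  proof -
    define t where "t = 1 / (real m + 1)"
    have t: "t > 0" by (simp add: t_def)
    define B where "B n = (if n = 0 then {} else {\<omega>\<in>space M. \<bar>(\<Sum>k\<in>blockA n. g (c k \<omega>)) - real n * E\<bar> \<ge> real n * t})" for n
    have Bev: "B n \<in> events" for n
    proof (cases "n = 0")
      case False
      have "{\<omega>\<in>space M. \<bar>(\<Sum>k\<in>blockA n. g (c k \<omega>)) - real n * E\<bar> \<ge> real n * t} \<in> events" by measurable
      then show ?thesis using False by (simp add: B_def)
    qed (simp add: B_def)
    have bnd: "prob (B n) \<le> 2 * exp (- (2 * t^2 / (b-a)^2) * real n)" for n
    proof (cases "n = 0")
      case False
      then show ?thesis
        using hoeff(2)[OF g ab, of t n] t unfolding B_def E_def by (simp add: mult_ac)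
    qed (simp add: B_def)
    have "summable (\<lambda>n. prob (B n))"
    proof (rule summable_comparison_test)
      show "\<exists>N. \<forall>n\<ge>N. norm (prob (B n)) \<le> 2 * exp (- (2 * t^2 / (b-a)^2) * real n)" using bnd by auto
      show "summable (\<lambda>n. 2 * exp (- (2 * t^2 / (b-a)^2) * real n))"
        by (rule summable_exp_lin) (use t ab(2) in simp)
    qed
    then have "AE \<omega> in M. eventually (\<lambda>n. n \<noteq> 0 \<longrightarrow> \<bar>(\<Sum>k\<in>blockA n. g (c k \<omega>)) - real n * E\<bar> < real n * t) sequentially"
      by (rule BC_wrap[OF Bev]) (auto simp: B_def split: if_splits)
    then show ?thesis
    proof (rule AE_mp[OF _ AE_I2], intro impI)
      fix \<omega> assume "eventually (\<lambda>n. n \<noteq> 0 \<longrightarrow> \<bar>(\<Sum>k\<in>blockA n. g (c k \<omega>)) - real n * E\<bar> < real n * t) sequentially"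
      moreover have "eventually (\<lambda>n. n \<noteq> (0::nat)) sequentially" by (rule eventually_sequentiallyI[of 1]) auto
      ultimately show "eventually (\<lambda>n. \<bar>(1 / real (card (blockA n))) * (\<Sum>k\<in>blockA n. g (c k \<omega>)) - E\<bar> < 1 / (real m + 1)) sequentially"
      proof eventually_elim
        case (elim n)
        then have "\<bar>(\<Sum>k\<in>blockA n. g (c k \<omega>)) - real n * E\<bar> / real n < t" by (simp add: divide_simps mult.commute)
        moreover have "\<bar>(\<Sum>k\<in>blockA n. g (c k \<omega>)) - real n * E\<bar> / real n = \<bar>(1 / real n) * (\<Sum>k\<in>blockA n. g (c k \<omega>)) - E\<bar>"
          using elim by (simp add: field_simps abs_div)
        ultimately show ?case by (simp add: t_def)
      qed
    qed
  qed
  have "AE \<omega> in M. \<forall>m. eventually (\<lambda>n. \<bar>(1 / real (card (blockA n))) * (\<Sum>k\<in>blockA n. g (c k \<omega>)) - E\<bar> < 1 / (real m + 1)) sequentially"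
    using ev by (simp add: AE_all_countable)
  then show ?thesis
  proof (rule AE_mp[OF _ AE_I2], intro impI)
    fix \<omega> assume H: "\<forall>m. eventually (\<lambda>n. \<bar>(1 / real (card (blockA n))) * (\<Sum>k\<in>blockA n. g (c k \<omega>)) - E\<bar> < 1 / (real m + 1)) sequentially"
    show "(\<lambda>n. (1 / real (card (blockA n))) * (\<Sum>k\<in>blockA n. g (c k \<omega>))) \<longlonglongrightarrow> (\<integral>x. \<rho> x * g x \<partial>lborel)"
      unfolding E_def[symmetric]
    proof (rule tendstoI)
      fix e :: real assume "e > 0"
      then obtain m where m: "1 / (real m + 1) < e"
        by (metis nat_approx_posE of_nat_Suc add.commute)
      show "eventually (\<lambda>n. dist ((1 / real (card (blockA n))) * (\<Sum>k\<in>blockA n. g (c k \<omega>))) E < e) sequentially"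
        using H[rule_format, of m] by eventually_elim (use m in \<open>simp add: dist_real_def\<close>)
    qed
  qed
qed

end

definition cell :: "nat \<Rightarrow> int \<Rightarrow> real set" where
  "cell m d = {real_of_int d / 2^m ..< (real_of_int d + 1) / 2^m}"

lemma cell_borel[measurable]: "cell m d \<in> sets borel" by (simp add: cell_def)

lemma measure_cell: "measure lborel (cell m d) = 1 / 2^m"
  by (simp add: cell_def field_simps)

definition discOK :: "real \<Rightarrow> (nat \<Rightarrow> real) \<Rightarrow> nat \<Rightarrow> bool" where
  "discOK C' x n \<longleftrightarrow> (\<forall>m d. 16^m \<le> n \<longrightarrow> real (card {j\<in>blockA n. x j \<in> cell m d}) \<le> (C'+1) * real n / 2^m)"

lemma summable_disc: "summable (\<lambda>n::nat. (real n+1)^2 * exp(-2* sqrt(real n)))"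
proof (rule summable_comparison_test_bigo[of "\<lambda>n. inverse (real n^2)"])
  show "summable (\<lambda>n. norm (inverse (real n^2)))" by (simp add: inverse_power_summable)
  show "(\<lambda>n::nat. (real n+1)^2 * exp(-2* sqrt(real n))) \<in> O(\<lambda>n. inverse (real n^2))" by real_asymp
qed

context setting begin

lemma poly_AE: "AE \<omega> in M. \<forall>rs. (\<lambda>n. (1 / real (card (blockA n))) * (\<Sum>k\<in>blockA n. polyr rs (c k \<omega>)))
     \<longlonglongrightarrow> (\<integral>x. \<rho> x * polyr rs x \<partial>lborel)"
proof (subst AE_all_countable, intro allI)
  fix rs
  define B where "B = (\<Sum>i<length rs. \<bar>real_of_rat (rs!i)\<bar>)"
  show "AE \<omega> in M. (\<lambda>n. (1 / real (card (blockA n))) * (\<Sum>k\<in>blockA n. polyr rs (c k \<omega>)))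
     \<longlonglongrightarrow> (\<integral>x. \<rho> x * polyr rs x \<partial>lborel)"
  proof (rule block_avg_AE[of _ "-(B+1)" "B+1"])
    fix x :: real assume "x \<in> {0..1}"
    then have "\<bar>polyr rs x\<bar> \<le> B" unfolding B_def by (rule polyr_bound)
    then show "polyr rs x \<in> {-(B+1)..B+1}" by auto
  next
    have "B \<ge> 0" unfolding B_def by (intro sum_nonneg) auto
    then show "-(B+1) < B+1" by simp
  qed simp
qed

lemma integrable_rho_g:
  assumes g[measurable]: "g \<in> borel_measurable borel" and B: "\<And>x. x \<in> {0..1} \<Longrightarrow> \<bar>g x\<bar> \<le> B"
  shows "integrable lborel (\<lambda>x. \<rho> x * g x)"
    and "\<bar>\<integral>x. \<rho> x * g x \<partial>lborel\<bar> \<le> C * B"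
proof -
  have B0: "B \<ge> 0" using B[of 0] by auto
  have ii: "integrable lborel (\<lambda>x::real. C * B * indicator {0..1} x)"
    by (intro integrable_mult_right integrable_real_indicator) (auto simp: emeasure_lborel_Icc_eq)
  have le: "\<bar>\<rho> x * g x\<bar> \<le> C * B * indicator {0..1} x" for x
  proof (cases "x \<in> {0..1}")
    case True
    have "\<bar>\<rho> x * g x\<bar> = \<rho> x * \<bar>g x\<bar>" using rho_nn[of x] by (simp add: abs_mult)
    also have "\<dots> \<le> C * B" using True B[of x] rho_le[of x] rho_nn[of x] B0 by (intro mult_mono) auto
    finally show ?thesis using True by simp
  qed (simp add: rho_out)
  show int: "integrable lborel (\<lambda>x. \<rho> x * g x)"
    by (rule Bochner_Integration.integrable_bound[OF ii]) (use le C_nn B0 in \<open>auto simp: abs_mult\<close>)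
  have "\<bar>\<integral>x. \<rho> x * g x \<partial>lborel\<bar> \<le> (\<integral>x. \<bar>\<rho> x * g x\<bar> \<partial>lborel)"
    using integral_norm_bound[of lborel "\<lambda>x. \<rho> x * g x"] by simp
  also have "\<dots> \<le> (\<integral>x. C * B * indicator {0..1::real} x \<partial>lborel)"
    by (intro integral_mono int ii integrable_abs le)
  also have "\<dots> = C * B" by simp
  finally show "\<bar>\<integral>x. \<rho> x * g x \<partial>lborel\<bar> \<le> C * B" .
qed

lemma A1_det:
  assumes in01: "\<And>k. x k \<in> {0..1}"
  and conv: "\<And>rs. (\<lambda>n. (1 / real (card (blockA n))) * (\<Sum>k\<in>blockA n. polyr rs (x k))) \<longlonglongrightarrow> (\<integral>y. \<rho> y * polyr rs y \<partial>lborel)"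
  and F: "continuous_on UNIV F"
  shows "(\<lambda>n. (1 / real (card (blockA n))) * (\<Sum>k\<in>blockA n. F (x k))) \<longlonglongrightarrow> (\<integral>y. \<rho> y * F y \<partial>lborel)"
proof (rule tendstoI)
  fix e :: real assume e: "e > 0"
  define \<eta> where "\<eta> = e / (C + 3)"
  have \<eta>: "\<eta> > 0" using e C_nn by (simp add: \<eta>_def)
  have Fm[measurable]: "F \<in> borel_measurable borel" by (rule borel_measurable_continuous_onI[OF F])
  obtain rs where rs: "\<And>y. y \<in> {0..1} \<Longrightarrow> \<bar>F y - polyr rs y\<bar> \<le> \<eta>"
    using poly_approx[OF continuous_on_subset[OF F] \<eta>] by blast
  have "compact (F ` {0..1})" by (intro compact_continuous_image continuous_on_subset[OF F]) auto
  then obtain BF where BF: "\<And>y. y \<in> {0..1} \<Longrightarrow> \<bar>F y\<bar> \<le> BF"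
    by (metis bounded_iff compact_imp_bounded image_eqI real_norm_def)
  define Bq where "Bq = (\<Sum>i<length rs. \<bar>real_of_rat (rs!i)\<bar>)"
  have Bq: "\<And>y. y \<in> {0..1} \<Longrightarrow> \<bar>polyr rs y\<bar> \<le> Bq" unfolding Bq_def by (rule polyr_bound)
  have iF: "integrable lborel (\<lambda>y. \<rho> y * F y)" by (rule integrable_rho_g(1)[OF Fm BF])
  have iq: "integrable lborel (\<lambda>y. \<rho> y * polyr rs y)" by (rule integrable_rho_g(1)[OF polyr_meas Bq])
  have "\<bar>\<integral>y. \<rho> y * (F y - polyr rs y) \<partial>lborel\<bar> \<le> C * \<eta>"
    by (rule integrable_rho_g(2)) (use rs in auto)
  moreover have "(\<integral>y. \<rho> y * (F y - polyr rs y) \<partial>lborel) = (\<integral>y. \<rho> y * F y \<partial>lborel) - (\<integral>y. \<rho> y * polyr rs y \<partial>lborel)"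
    using iF iq by (simp add: right_diff_distrib)
  ultimately have I: "\<bar>(\<integral>y. \<rho> y * F y \<partial>lborel) - (\<integral>y. \<rho> y * polyr rs y \<partial>lborel)\<bar> \<le> C * \<eta>" by simp
  have avg: "\<bar>(1 / real (card (blockA n))) * (\<Sum>k\<in>blockA n. F (x k)) - (1 / real (card (blockA n))) * (\<Sum>k\<in>blockA n. polyr rs (x k))\<bar> \<le> \<eta>" for n
  proof (cases "n = 0")
    case False
    have "\<bar>(\<Sum>k\<in>blockA n. F (x k)) - (\<Sum>k\<in>blockA n. polyr rs (x k))\<bar> = \<bar>\<Sum>k\<in>blockA n. (F (x k) - polyr rs (x k))\<bar>"
      by (simp add: sum_subtractf)
    also have "\<dots> \<le> (\<Sum>k\<in>blockA n. \<bar>F (x k) - polyr rs (x k)\<bar>)" by (rule sum_abs)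
    also have "\<dots> \<le> (\<Sum>k\<in>blockA n. \<eta>)" by (intro sum_mono rs in01)
    also have "\<dots> = real n * \<eta>" by simp
    finally have "\<bar>(\<Sum>k\<in>blockA n. F (x k)) - (\<Sum>k\<in>blockA n. polyr rs (x k))\<bar> / real n \<le> \<eta>"
      using False by (simp add: divide_simps mult.commute)
    then show ?thesis using False by (simp add: diff_divide_distrib[symmetric])
  qed (use \<eta> in simp)
  show "eventually (\<lambda>n. dist ((1 / real (card (blockA n))) * (\<Sum>k\<in>blockA n. F (x k))) (\<integral>y. \<rho> y * F y \<partial>lborel) < e) sequentially"
    using conv[of rs, THEN tendstoD, OF \<eta>]
  proof eventually_elim
    case (elim n)
    have "(C+2)*\<eta> < (C+3)*\<eta>" using \<eta> by (intro mult_strict_right_mono) auto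
    moreover have "(C+3)*\<eta> = e" using C_nn by (simp add: \<eta>_def)
    ultimately have "\<eta> + \<eta> + C * \<eta> < e" by (simp add: algebra_simps)
    then show ?case using elim avg[of n] I by (simp add: dist_real_def)
  qed
qed

lemma cell_mean_le: "(\<integral>x. \<rho> x * indicator (cell m d) x \<partial>lborel) \<le> C / 2^m"
proof -
  have i1: "integrable lborel (\<lambda>x. \<rho> x * indicator (cell m d) x)"
    by (rule integrable_rho_g(1)[where B=1]) (auto split: split_indicator)
  have i2: "integrable lborel (\<lambda>x. C * indicator (cell m d) x)"
  proof -
    have "real_of_int d / 2^m \<le> (real_of_int d + 1)/2^m" by (simp add: divide_right_mono)
    then show ?thesis by (intro integrable_mult_right integrable_real_indicator) (auto simp: cell_def)
  qed
  have "(\<integral>x. \<rho> x * indicator (cell m d) x \<partial>lborel) \<le> (\<integral>x. C * indicator (cell m d) x \<partial>lborel)"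
    by (intro integral_mono i1 i2) (auto simp: rho_le split: split_indicator)
  also have "\<dots> = C / 2^m" using measure_cell[of m d] by simp
  finally show ?thesis .
qed

lemma disc_AE0: "AE \<omega> in M. eventually (\<lambda>n. \<forall>m d. 16^m \<le> n \<and> d \<in> {0..2^m} \<longrightarrow>
    real (card {j\<in>blockA n. c j \<omega> \<in> cell m d}) \<le> (C+1) * real n / 2^m) sequentially"
proof -
  define S where "S n = {p::nat\<times>int. 16^fst p \<le> n \<and> snd p \<in> {0..2^fst p}}" for n :: nat
  define E where "E n p = {\<omega>\<in>space M. (\<Sum>k\<in>blockA n. indicator (cell (fst p) (snd p)) (c k \<omega>))
      \<ge> real n * (\<integral>x. \<rho> x * indicator (cell (fst p) (snd p)) x \<partial>lborel) + real n * (1 / 2^fst p)}" for n p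
  define B where "B n = (\<Union>p\<in>S n. E n p)" for n
  have Ssub: "S n \<subseteq> {0..n} \<times> {0..int n}" for n
  proof
    fix p assume "p \<in> S n"
    then have h: "16^fst p \<le> n" "snd p \<in> {0..2^fst p}" by (auto simp: S_def)
    have "fst p < 2^fst p" by (rule less_exp)
    also have "(2::nat)^fst p \<le> 16^fst p" by (rule power_mono) auto
    finally have 1: "fst p \<le> n" using h by linarith
    have "(2::int)^fst p \<le> 16^fst p" by (rule power_mono) auto
    also have "(16::int)^fst p \<le> int n" using h(1) by (metis of_nat_le_iff of_nat_numeral of_nat_power)
    finally have "(2::int)^fst p \<le> int n" .
    then have 2: "snd p \<le> int n" using h(2) by (meson atLeastAtMost_iff order_trans)
    show "p \<in> {0..n} \<times> {0..int n}" using 1 2 h(2) by (cases p) auto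
  qed
  have finS: "finite (S n)" for n by (rule finite_subset[OF Ssub]) auto
  have cardS: "card (S n) \<le> (n+1)^2" for n
  proof -
    have "card (S n) \<le> card ({0..n} \<times> {0..int n})" by (rule card_mono[OF _ Ssub]) auto
    also have "\<dots> = (n+1)^2" proof -
      have "nat (int n + 1) = n + 1" by simp
      then show ?thesis by (simp add: card_cartesian_product power2_eq_square)
    qed
    finally show ?thesis .
  qed
  have Eev: "E n p \<in> events" for n p unfolding E_def by measurable
  have Bev: "B n \<in> events" for n unfolding B_def using finS Eev by (intro sets.finite_UN) auto
  have Ebound: "prob (E n p) \<le> exp (-2 * sqrt (real n))" if "p \<in> S n" for n p
  proof -
    obtain m d where p: "p = (m, d)" by (cases p)
    have mn: "16^m \<le> n" using that p by (auto simp: S_def)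
    then have n: "n > 0" by (metis le_zero_eq power_not_zero zero_neq_numeral gr0I)
    have "prob (E n p) \<le> exp (-2 * real n * (1/2^m)^2 / (1-0)^2)"
      unfolding E_def p fst_conv snd_conv
      by (rule hoeff(1)) (use n in \<open>auto split: split_indicator\<close>)
    also have "\<dots> \<le> exp (-2 * sqrt (real n))"
    proof -
      have "real (16^m) \<le> real n" using mn by linarith
      moreover have "((4::real)^m)^2 = 16^m" by (simp add: power2_eq_square power_mult_distrib[symmetric])
      ultimately have "sqrt ((4^m)^2) \<le> sqrt (real n)" by simp
      then have q: "4^m \<le> sqrt (real n)" by simp
      have "sqrt (real n) * 4^m \<le> sqrt (real n) * sqrt (real n)"
        using q by (intro mult_left_mono) auto
      then have "sqrt (real n) * 4^m \<le> real n" by simp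
      then have "sqrt (real n) \<le> real n / 4^m" by (simp add: field_simps)
      also have "real n / 4^m = real n * (1/2^m)^2"
      proof -
        have "((2::real)^m)^2 = 4^m" by (simp add: power2_eq_square power_mult_distrib[symmetric])
        then show ?thesis by (simp add: power_divide)
      qed
      finally show ?thesis by simp
    qed
    finally show ?thesis .
  qed
  have Bbound: "prob (B n) \<le> (real n+1)^2 * exp(-2* sqrt(real n))" for n
  proof -
    have "prob (B n) \<le> (\<Sum>p\<in>S n. prob (E n p))"
      unfolding B_def using finS Eev by (intro finite_measure_subadditive_finite) auto
    also have "\<dots> \<le> (\<Sum>p\<in>S n. exp (-2 * sqrt (real n)))" by (intro sum_mono Ebound)
    also have "\<dots> = real (card (S n)) * exp (-2 * sqrt (real n))" by simp
    also have "\<dots> \<le> real ((n+1)^2) * exp (-2 * sqrt (real n))"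
      using cardS[of n] by (intro mult_right_mono) (simp_all only: of_nat_le_iff, simp)
    finally show ?thesis by (simp add: add.commute)
  qed
  have "summable (\<lambda>n. prob (B n))"
    by (rule summable_comparison_test[OF _ summable_disc]) (use Bbound in auto)
  then show ?thesis
  proof (rule BC_wrap[OF Bev])
    fix n \<omega> assume \<omega>: "\<omega> \<in> space M" "\<omega> \<notin> B n"
    show "\<forall>m d. 16^m \<le> n \<and> d \<in> {0..2^m} \<longrightarrow>
      real (card {j\<in>blockA n. c j \<omega> \<in> cell m d}) \<le> (C+1) * real n / 2^m"
    proof (intro allI impI)
      fix m :: nat and d :: int assume md: "16^m \<le> n \<and> d \<in> {0..2^m}"
      then have "\<omega> \<notin> E n (m,d)" using \<omega> by (auto simp: B_def S_def)
      then have lt: "(\<Sum>k\<in>blockA n. indicator (cell m d) (c k \<omega>))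
          < real n * (\<integral>x. \<rho> x * indicator (cell m d) x \<partial>lborel) + real n * (1 / 2^m)"
        using \<omega> by (auto simp: E_def not_le)
      have "real (card {j\<in>blockA n. c j \<omega> \<in> cell m d}) = (\<Sum>k\<in>blockA n. indicator (cell m d) (c k \<omega>))"
        by (simp add: indicator_def sum.If_cases Int_def)
      also have "\<dots> \<le> real n * (C / 2^m) + real n * (1 / 2^m)"
        using lt cell_mean_le[of m d] by (smt (verit) mult_left_mono of_nat_0_le_iff)
      also have "\<dots> = (C+1) * real n / 2^m" by (simp add: field_simps)
      finally show "real (card {j\<in>blockA n. c j \<omega> \<in> cell m d}) \<le> (C+1) * real n / 2^m" .
    qed
  qed
qed

lemma disc_AE: "AE \<omega> in M. eventually (\<lambda>n. discOK C (\<lambda>k. c k \<omega>) n) sequentially"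
  using disc_AE0 AE_c_in01
proof eventually_elim
  case (elim \<omega>)
  show ?case using elim(1)
  proof eventually_elim
    case (elim n)
    show ?case unfolding discOK_def
    proof (intro allI impI)
      fix m :: nat and d :: int assume m: "16^m \<le> n"
      show "real (card {j\<in>blockA n. c j \<omega> \<in> cell m d}) \<le> (C+1) * real n / 2^m"
      proof (cases "d \<in> {0..2^m}")
        case True then show ?thesis using elim m by blast
      next
        case False
        have Emp: "{j\<in>blockA n. c j \<omega> \<in> cell m d} = {}"
        proof (rule ccontr)
          assume "{j\<in>blockA n. c j \<omega> \<in> cell m d} \<noteq> {}"
          then obtain j where j: "c j \<omega> \<in> cell m d" by auto
          have c01: "c j \<omega> \<in> {0..1}" using \<open>\<forall>k. c k \<omega> \<in> {0..1}\<close> by auto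
          have "real_of_int d / 2^m \<le> 1" using j c01 unfolding cell_def
            by (metis atLeastLessThan_iff atLeastAtMost_iff order_trans)
          then have "real_of_int d \<le> 2^m" by (simp add: field_simps)
          then have d1: "d \<le> 2^m" by (metis of_int_le_iff of_int_numeral of_int_power)
          have "0 < (real_of_int d + 1) / 2^m" using j c01 by (auto simp: cell_def)
          then have "0 < real_of_int d + 1" by (simp add: zero_less_divide_iff)
          then have "0 \<le> d" by linarith
          then show False using False d1 by auto
        qed
        show ?thesis unfolding Emp using C_nn by simp
      qed
    qed
  qed
qed

end

lemma card_blockA_g[simp]: "card (blockA n) = n" by (simp add: blockA_def)
lemma finite_blockA_g[simp]: "finite (blockA n)" by (simp add: blockA_def)

lemma neg_ln_layer:
  fixes t :: real
  assumes t: "t > 0" and tM: "1 / 2^M \<le> t"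
  shows "- ln t \<le> ln 2 * (real m0 + real (card {m \<in> {m0..<M}. t < 1 / 2^m}))"
proof -
  define r where "r = - log 2 t"
  define k where "k = nat \<lceil>r\<rceil>"
  have lnt: "- ln t = r * ln 2" using t by (simp add: r_def log_def)
  have "log 2 (1 / 2^M) \<le> log 2 t" using tM t by (subst log_le_cancel_iff) auto
  then have rM: "r \<le> real M" by (simp add: r_def log_divide)
  have rk: "r \<le> real k" unfolding k_def by linarith
  have kM: "k \<le> M" unfolding k_def using rM by (simp add: nat_le_iff ceiling_le_iff)
  have "real k \<le> real m0 + real (card {m \<in> {m0..<M}. t < 1 / 2^m})"
  proof (cases "k \<le> m0")
    case False
    have sub: "{m0..<k} \<subseteq> {m \<in> {m0..<M}. t < 1 / 2^m}"
    proof
      fix m assume m: "m \<in> {m0..<k}"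
      then have "m < nat \<lceil>r\<rceil>" unfolding k_def by simp
      then have "int m < \<lceil>r\<rceil>" by linarith
      then have "real m < r" by (simp add: less_ceiling_iff)
      then have "log 2 t < - real m" by (simp add: r_def)
      then have "t < 2 powr (- real m)" using t by (simp add: log_less_iff)
      also have "2 powr (- real m) = 1 / 2^m" by (simp add: powr_minus powr_realpow divide_inverse)
      finally show "m \<in> {m \<in> {m0..<M}. t < 1 / 2^m}" using m kM by auto
    qed
    have "card {m0..<k} \<le> card {m \<in> {m0..<M}. t < 1 / 2^m}" by (rule card_mono[OF _ sub]) auto
    then show ?thesis by simp
  qed simp
  then have "r \<le> real m0 + real (card {m \<in> {m0..<M}. t < 1 / 2^m})" using rk by linarith
  then show ?thesis unfolding lnt by (simp add: mult.commute mult_left_mono)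
qed

lemma cell_iff: "z \<in> cell m e \<longleftrightarrow> real_of_int e \<le> z * 2^m \<and> z * 2^m < real_of_int e + 1"
  by (simp add: cell_def pos_divide_le_eq pos_less_divide_eq)

lemma count_close:
  assumes D: "discOK C x N" and m: "16^m \<le> N"
  shows "real (card {j\<in>blockA N. \<bar>x j - y\<bar> < 1 / 2^m}) \<le> 3 * ((C+1) * real N / 2^m)"
proof -
  define d where "d = \<lfloor>y * 2^m\<rfloor>"
  have d1: "real_of_int d \<le> y * 2^m" "y * 2^m < real_of_int d + 1" unfolding d_def by linarith+
  have sub: "{j\<in>blockA N. \<bar>x j - y\<bar> < 1 / 2^m} \<subseteq>
     {j\<in>blockA N. x j \<in> cell m (d-1)} \<union> {j\<in>blockA N. x j \<in> cell m d} \<union> {j\<in>blockA N. x j \<in> cell m (d+1)}"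
  proof
    fix j assume j: "j \<in> {j\<in>blockA N. \<bar>x j - y\<bar> < 1 / 2^m}"
    then have "\<bar>x j - y\<bar> * 2^m < (1 / 2^m) * 2^m" by (intro mult_strict_right_mono) auto
    moreover have "\<bar>x j * 2^m - y * 2^m\<bar> = \<bar>x j - y\<bar> * 2^m" by (simp add: left_diff_distrib[symmetric] abs_mult)
    ultimately have "\<bar>x j * 2^m - y * 2^m\<bar> < 1" by simp
    then have lo: "real_of_int d - 1 < x j * 2^m" and hi: "x j * 2^m < real_of_int d + 2" using d1 by linarith+
    have "x j \<in> cell m (d-1) \<or> x j \<in> cell m d \<or> x j \<in> cell m (d+1)"
      unfolding cell_iff using lo hi by linarith
    then show "j \<in> {j\<in>blockA N. x j \<in> cell m (d-1)} \<union> {j\<in>blockA N. x j \<in> cell m d} \<union> {j\<in>blockA N. x j \<in> cell m (d+1)}"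
      using j by auto
  qed
  have "card {j\<in>blockA N. \<bar>x j - y\<bar> < 1 / 2^m} \<le>
     card ({j\<in>blockA N. x j \<in> cell m (d-1)} \<union> {j\<in>blockA N. x j \<in> cell m d} \<union> {j\<in>blockA N. x j \<in> cell m (d+1)})"
    by (rule card_mono[OF _ sub]) (auto intro: finite_subset[of _ "blockA N"])
  also have "\<dots> \<le> card {j\<in>blockA N. x j \<in> cell m (d-1)} + card {j\<in>blockA N. x j \<in> cell m d} + card {j\<in>blockA N. x j \<in> cell m (d+1)}"
    by (metis (no_types, lifting) add_right_mono card_Un_le order_trans)
  finally have "real (card {j\<in>blockA N. \<bar>x j - y\<bar> < 1 / 2^m}) \<le>
      real (card {j\<in>blockA N. x j \<in> cell m (d-1)}) + real (card {j\<in>blockA N. x j \<in> cell m d}) + real (card {j\<in>blockA N. x j \<in> cell m (d+1)})"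
    by linarith
  also have "\<dots> \<le> (C+1) * real N / 2^m + (C+1) * real N / 2^m + (C+1) * real N / 2^m"
    using D m unfolding discOK_def by (intro add_mono) auto
  finally show ?thesis by (simp add: mult.commute)
qed

lemma card_pairs_eq:
  assumes "finite A" "finite B"
  shows "card {(i,j). i \<in> A \<and> j \<in> B \<and> P i j} = (\<Sum>i\<in>A. card {j\<in>B. P i j})"
proof -
  have "{(i,j). i \<in> A \<and> j \<in> B \<and> P i j} = Sigma A (\<lambda>i. {j\<in>B. P i j})" by auto
  then show ?thesis using assms by simp
qed

lemma pair_count:
  assumes D: "discOK C x N''" and m: "16^m \<le> N''"
  shows "real (card {(i,j). i \<in> blockA N' \<and> j \<in> blockA N'' \<and> \<bar>x i - x j\<bar> < 1 / 2^m})
     \<le> 3 * (C+1) * real N' * real N'' / 2^m"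
proof -
  have "real (card {(i,j). i \<in> blockA N' \<and> j \<in> blockA N'' \<and> \<bar>x i - x j\<bar> < 1 / 2^m})
     = (\<Sum>i\<in>blockA N'. real (card {j\<in>blockA N''. \<bar>x j - x i\<bar> < 1 / 2^m}))"
    by (subst card_pairs_eq) (auto simp: abs_minus_commute)
  also have "\<dots> \<le> (\<Sum>i\<in>blockA N'. 3 * ((C+1) * real N'' / 2^m))"
    by (intro sum_mono count_close[OF D m])
  also have "\<dots> = 3 * (C+1) * real N' * real N'' / 2^m" by simp
  finally show ?thesis .
qed


lemma geom_sum_eq:
  assumes "m0 \<le> M"
  shows "(\<Sum>m\<in>{m0..<M}. 1 / 2^m :: real) = 2 / 2^m0 - 2 / 2^M"
proof -
  obtain k where M: "M = m0 + k" using assms le_Suc_ex by blast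
  have "(\<Sum>m\<in>{m0..<m0+k}. 1 / 2^m :: real) = 2 / 2^m0 - 2 / 2^(m0+k)"
  proof (induction k)
    case (Suc k)
    have "{m0..<m0 + Suc k} = insert (m0+k) {m0..<m0+k}" by auto
    then have "(\<Sum>m\<in>{m0..<m0+Suc k}. 1 / 2^m :: real) = 1 / 2^(m0+k) + (\<Sum>m\<in>{m0..<m0+k}. 1 / 2^m)" by simp
    also have "\<dots> = 2 / 2^m0 - 2 / 2^(m0 + Suc k)"
    proof -
      have "(2::real) / 2^(m0 + Suc k) = 1 / 2^(m0+k)" by simp
      then show ?thesis using Suc by linarith
    qed
    finally show ?case .
  qed simp
  then show ?thesis using M by simp
qed

lemma geom_sum_le: "(\<Sum>m\<in>{m0..<M}. 1 / 2^m :: real) \<le> 2 / 2^m0"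
proof (cases "m0 \<le> M")
  case True then show ?thesis by (simp add: geom_sum_eq)
qed simp

lemma A2_bound:
  fixes x :: "nat \<Rightarrow> real"
  assumes C: "C \<ge> 0" and n: "n > 0" and aQ: "a \<le> Q" and bQ: "b \<le> Q"
    and G: "gapOK x Q n" and D: "discOK C x (2^b * n)" and M1: "16^M1 \<le> n"
  shows "(1 / real (card (blockA (2^a*n) \<times> blockA (2^b*n)))) *
    (\<Sum>(i,j)\<in>{(i,j). i \<in> blockA (2^a*n) \<and> j \<in> blockA (2^b*n) \<and> i \<noteq> j \<and> \<bar>x i - x j\<bar> < 1/2^m0}. - ln \<bar>x i - x j\<bar>)
    \<le> 12 * (C+1) * ln (real n) / 2^M1 + 3 * (C+1) * ln 2 * (real m0 + 2) / 2^m0"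
proof -
  define N1 where "N1 = 2^a * n"
  define N2 where "N2 = 2^b * n"
  define t where "t p = \<bar>x (fst p) - x (snd p)\<bar>" for p
  define f where "f p = - ln (t p)" for p
  define P where "P = {(i,j). i \<in> blockA N1 \<and> j \<in> blockA N2 \<and> i \<noteq> j \<and> \<bar>x i - x j\<bar> < 1/2^m0}"
  define Ps where "Ps = P \<inter> {p. t p < 1/2^M1}"
  define Pb where "Pb = P - {p. t p < 1/2^M1}"
  have N1: "N1 > 0" "N2 > 0" using n by (auto simp: N1_def N2_def)
  have nN2: "n \<le> N2" unfolding N2_def by simp
  have finP: "finite P" unfolding P_def
    by (rule finite_subset[of _ "blockA N1 \<times> blockA N2"]) auto
  have sumeq: "(\<Sum>(i,j)\<in>P. - ln \<bar>x i - x j\<bar>) = sum f P"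
    by (intro sum.cong) (auto simp: f_def t_def)
  have split: "sum f P = sum f Ps + sum f Pb"
    unfolding Ps_def Pb_def by (rule sum.Int_Diff[OF finP])
  have range1: "blockA N1 \<subseteq> {n..<2^(Q+1)*n}" and range2: "blockA N2 \<subseteq> {n..<2^(Q+1)*n}"
  proof -
    have "(2::nat)^(a+1) \<le> 2^(Q+1)" "(2::nat)^(b+1) \<le> 2^(Q+1)" using aQ bQ by (auto intro: power_increasing)
    then have "2^(a+1)*n \<le> 2^(Q+1)*n" "2^(b+1)*n \<le> 2^(Q+1)*n" by (auto intro: mult_right_mono)
    moreover have "n \<le> 2^a*n" "n \<le> 2^b*n" by auto
    ultimately show "blockA N1 \<subseteq> {n..<2^(Q+1)*n}" "blockA N2 \<subseteq> {n..<2^(Q+1)*n}"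
      by (auto simp: blockA_def N1_def N2_def)
  qed
  have gap: "t p \<ge> 1 / real n ^ 4" if "p \<in> P" for p
  proof -
    obtain i j where pij: "p = (i,j)" by fastforce
    have h: "i \<in> blockA N1" "j \<in> blockA N2" "i \<noteq> j" using that by (auto simp: P_def pij)
    then have "i \<in> {n..<2^(Q+1)*n}" "j \<in> {n..<2^(Q+1)*n}" using range1 range2 by auto
    then show ?thesis using G h(3) unfolding gapOK_def t_def pij by simp
  qed
  have tpos: "t p > 0" if "p \<in> P" for p
  proof -
    have "1 / real n ^ 4 > 0" using n by simp
    then show ?thesis using gap[OF that] by linarith
  qed
  have lnn: "ln (real n) \<ge> 0" using n by simp
  have fs: "f p \<le> 4 * ln (real n)" if "p \<in> P" for p
  proof -
    have "ln (1 / real n ^ 4) \<le> ln (t p)" using gap[OF that] n tpos[OF that] by (subst ln_le_cancel_iff) auto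
    moreover have "ln (1 / real n ^ 4) = - (4 * ln (real n))" using n by (simp add: ln_div ln_realpow)
    ultimately show ?thesis by (simp add: f_def)
  qed
  have cardPs: "real (card Ps) \<le> 3 * (C+1) * real N1 * real N2 / 2^M1"
  proof -
    have "card Ps \<le> card {(i,j). i \<in> blockA N1 \<and> j \<in> blockA N2 \<and> \<bar>x i - x j\<bar> < 1 / 2^M1}"
      by (rule card_mono) (auto simp: Ps_def P_def t_def intro: finite_subset[of _ "blockA N1 \<times> blockA N2"])
    moreover have "16^M1 \<le> N2" using M1 nN2 by linarith
    ultimately show ?thesis using pair_count[OF _ , of C x N2 M1 N1] D unfolding N2_def
      by (smt (verit) of_nat_le_iff)
  qed
  have sPs: "sum f Ps \<le> 3 * (C+1) * real N1 * real N2 / 2^M1 * (4 * ln (real n))"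
  proof -
    have "sum f Ps \<le> (\<Sum>p\<in>Ps. 4 * ln (real n))" by (intro sum_mono fs) (auto simp: Ps_def)
    also have "\<dots> = real (card Ps) * (4 * ln (real n))" by simp
    also have "\<dots> \<le> 3 * (C+1) * real N1 * real N2 / 2^M1 * (4 * ln (real n))"
      by (intro mult_right_mono cardPs) (use lnn in simp)
    finally show ?thesis .
  qed
  define I where "I p m = (if t p < 1 / 2^m then 1 else (0::real))" for p m
  have fb: "f p \<le> ln 2 * (real m0 + (\<Sum>m\<in>{m0..<M1}. I p m))" if "p \<in> Pb" for p
  proof -
    have "p \<in> P" "\<not> t p < 1/2^M1" using that by (auto simp: Pb_def)
    then have "- ln (t p) \<le> ln 2 * (real m0 + real (card {m \<in> {m0..<M1}. t p < 1 / 2^m}))"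
      by (intro neg_ln_layer tpos) auto
    moreover have "real (card {m \<in> {m0..<M1}. t p < 1 / 2^m}) = (\<Sum>m\<in>{m0..<M1}. I p m)"
      unfolding I_def by (simp add: sum.If_cases Int_def)
    ultimately show ?thesis by (simp add: f_def)
  qed
  have finPb: "finite Pb" unfolding Pb_def using finP by simp
  have cnt: "real (card {p\<in>Pb. t p < 1 / 2^m}) \<le> 3 * (C+1) * real N1 * real N2 / 2^m" if "m0 \<le> m" for m
  proof (cases "m < M1")
    case True
    have "card {p\<in>Pb. t p < 1 / 2^m} \<le> card {(i,j). i \<in> blockA N1 \<and> j \<in> blockA N2 \<and> \<bar>x i - x j\<bar> < 1 / 2^m}"
      by (rule card_mono) (auto simp: Pb_def P_def t_def intro: finite_subset[of _ "blockA N1 \<times> blockA N2"])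
    moreover have "(16::nat)^m \<le> 16^M1" using True by (intro power_increasing) auto
    then have "16^m \<le> N2" using M1 nN2 by linarith
    ultimately show ?thesis using pair_count[of C x N2 m N1] D unfolding N2_def
      by (smt (verit) of_nat_le_iff)
  next
    case False
    have Emp: "{p\<in>Pb. t p < 1 / 2^m} = {}"
    proof (rule ccontr)
      assume "{p\<in>Pb. t p < 1 / 2^m} \<noteq> {}"
      then obtain p where p: "p \<in> Pb" "t p < 1 / 2^m" by auto
      have "(1::real) / 2^m \<le> 1 / 2^M1" using False by (simp add: divide_simps power_increasing)
      then show False using p by (auto simp: Pb_def)
    qed
    show ?thesis unfolding Emp using C N1 by simp
  qed
  have sPb: "sum f Pb \<le> ln 2 * (3 * (C+1) * real N1 * real N2) * ((real m0 + 2) / 2^m0)"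
  proof -
    have "sum f Pb \<le> (\<Sum>p\<in>Pb. ln 2 * (real m0 + (\<Sum>m\<in>{m0..<M1}. I p m)))" by (intro sum_mono fb)
    also have "\<dots> = ln 2 * (real m0 * real (card Pb) + (\<Sum>m\<in>{m0..<M1}. \<Sum>p\<in>Pb. I p m))"
      by (simp add: sum_distrib_left sum.distrib sum.swap[of _ Pb] algebra_simps)
    also have "(\<Sum>m\<in>{m0..<M1}. \<Sum>p\<in>Pb. I p m) = (\<Sum>m\<in>{m0..<M1}. real (card {p\<in>Pb. t p < 1 / 2^m}))"
      unfolding I_def by (intro sum.cong refl) (simp add: sum.If_cases Int_def finPb)
    also have "card Pb = card {p\<in>Pb. t p < 1 / 2^m0}"
      by (rule arg_cong[where f=card]) (auto simp: Pb_def P_def t_def)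
    also have "ln 2 * (real m0 * real (card {p\<in>Pb. t p < 1 / 2^m0}) + (\<Sum>m\<in>{m0..<M1}. real (card {p\<in>Pb. t p < 1 / 2^m})))
        \<le> ln 2 * (real m0 * (3 * (C+1) * real N1 * real N2 / 2^m0) + (\<Sum>m\<in>{m0..<M1}. 3 * (C+1) * real N1 * real N2 / 2^m))"
      by (intro mult_left_mono add_mono sum_mono cnt) auto
    also have "(\<Sum>m\<in>{m0..<M1}. 3 * (C+1) * real N1 * real N2 / 2^m) = (3 * (C+1) * real N1 * real N2) * (\<Sum>m\<in>{m0..<M1}. 1 / 2^m)"
      by (simp add: sum_distrib_left)
    also have "ln 2 * (real m0 * (3 * (C+1) * real N1 * real N2 / 2^m0) + (3 * (C+1) * real N1 * real N2) * (\<Sum>m\<in>{m0..<M1}. 1 / 2^m))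
       \<le> ln 2 * (real m0 * (3 * (C+1) * real N1 * real N2 / 2^m0) + (3 * (C+1) * real N1 * real N2) * (2 / 2^m0))"
      using C by (intro mult_left_mono add_mono order_refl geom_sum_le) auto
    also have "\<dots> = ln 2 * (3 * (C+1) * real N1 * real N2) * ((real m0 + 2) / 2^m0)"
      by (simp add: field_simps)
    finally show ?thesis .
  qed
  have cardA: "real (card (blockA N1 \<times> blockA N2)) = real N1 * real N2"
    by (simp add: card_cartesian_product)
  have "(1 / real (card (blockA N1 \<times> blockA N2))) * sum f P
      \<le> (1 / (real N1 * real N2)) * (3 * (C+1) * real N1 * real N2 / 2^M1 * (4 * ln (real n))
          + ln 2 * (3 * (C+1) * real N1 * real N2) * ((real m0 + 2) / 2^m0))"
    unfolding cardA split using sPs sPb N1 by (intro mult_left_mono add_mono) auto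
  also have "\<dots> = 12 * (C+1) * ln (real n) / 2^M1 + 3 * (C+1) * ln 2 * (real m0 + 2) / 2^m0"
    using N1 by (simp add: field_simps)
  finally have "(1 / real (card (blockA N1 \<times> blockA N2))) * (\<Sum>(i,j)\<in>P. - ln \<bar>x i - x j\<bar>)
     \<le> 12 * (C+1) * ln (real n) / 2^M1 + 3 * (C+1) * ln 2 * (real m0 + 2) / 2^m0"
    unfolding sumeq .
  then show ?thesis unfolding P_def N1_def N2_def .
qed

lemma blockAq_sub: "blockAq n Q \<subseteq> {n..<2^(Q+1)*n}"
proof
  fix i assume "i \<in> blockAq n Q"
  then obtain j where j: "j \<le> Q" "i \<in> blockA (2^j*n)" by (auto simp: blockAq_def)
  have "(2::nat)^(j+1) \<le> 2^(Q+1)" using j by (intro power_increasing) auto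
  then have "2^(j+1)*n \<le> 2^(Q+1)*n" by (rule mult_right_mono) auto
  moreover have "n \<le> 2^j*n" by simp
  moreover have "2^j*n \<le> i" "i < 2^(j+1)*n" using j(2) by (auto simp: blockA_def)
  ultimately have a: "n \<le> i" and b: "i < 2^(Q+1)*n" by linarith+
  show "i \<in> {n..<2^(Q+1)*n}" using a b by (simp only: atLeastLessThan_iff)
qed

lemma A3_bound:
  fixes x :: "nat \<Rightarrow> real"
  assumes lam: "lam > 0" and n: "n > 0" and G: "gapOK x Q n"
    and i: "i \<in> blockAq n Q" and j: "j \<in> blockAq n Q" and ij: "i \<noteq> j"
  shows "(exp (- lam * real i) + exp (- lam * real j)) / (2 * \<bar>x i - x j\<bar>) \<le> real n ^ 4 * exp (- lam * real n)"
proof -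
  have ir: "i \<in> {n..<2^(Q+1)*n}" "j \<in> {n..<2^(Q+1)*n}"
    using subsetD[OF blockAq_sub i] subsetD[OF blockAq_sub j] by auto
  have g: "\<bar>x i - x j\<bar> \<ge> 1 / real n ^ 4" using G ir ij unfolding gapOK_def by auto
  have pos: "1 / real n ^ 4 > 0" using n by simp
  have ei: "exp (- lam * real i) \<le> exp (- lam * real n)" using ir lam by auto
  have ej: "exp (- lam * real j) \<le> exp (- lam * real n)" using ir lam by auto
  have num: "exp (- lam * real i) + exp (- lam * real j) \<le> 2 * exp (- lam * real n)" using ei ej by linarith
  have "(exp (- lam * real i) + exp (- lam * real j)) / (2 * \<bar>x i - x j\<bar>)
      \<le> (2 * exp (- lam * real n)) / (2 * (1 / real n ^ 4))"
    using num g pos by (intro frac_le) auto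
  also have "\<dots> = real n ^ 4 * exp (- lam * real n)" using n by simp
  finally show ?thesis .
qed

definition M1f :: "nat \<Rightarrow> nat" where "M1f n = nat \<lfloor>log 2 (real n) / 4\<rfloor>"

lemma M1f_props:
  assumes n: "n > 0"
  shows "16^M1f n \<le> n" and "1 / 2^(M1f n) \<le> 2 / real n powr (1/4)"
proof -
  define r where "r = log 2 (real n) / 4"
  have r0: "r \<ge> 0" using n by (simp add: r_def)
  have M: "real (M1f n) = of_int \<lfloor>r\<rfloor>" unfolding M1f_def r_def[symmetric] using r0 by simp
  have Mr: "real (M1f n) \<le> r" "r - 1 < real (M1f n)" unfolding M by linarith+
  have "real ((16::nat)^M1f n) = (2::real)^(4 * M1f n)" by (simp add: power_mult)
  also have "\<dots> = 2 powr (real (4 * M1f n))" by (rule powr_realpow[symmetric]) simp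
  also have "\<dots> = 2 powr (4 * real (M1f n))" by simp
  also have "\<dots> \<le> 2 powr (4 * r)" using Mr by (intro powr_mono) auto
  also have "4 * r = log 2 (real n)" by (simp add: r_def)
  also have "2 powr log 2 (real n) = real n" using n by simp
  finally show "16^M1f n \<le> n" by linarith
  have "2 powr r = 2 powr (log 2 (real n) * (1/4))" by (simp add: r_def)
  also have "\<dots> = (2 powr log 2 (real n)) powr (1/4)" by (rule powr_powr[symmetric])
  also have "\<dots> = real n powr (1/4)" using n by simp
  finally have "2 powr r = real n powr (1/4)" .
  then have "real n powr (1/4) / 2 = 2 powr (r - 1)" by (simp add: powr_diff)
  also have "\<dots> \<le> 2 powr real (M1f n)" using Mr by (intro powr_mono) auto
  also have "\<dots> = 2 ^ M1f n" by (simp add: powr_realpow)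
  finally have "real n powr (1/4) / 2 \<le> 2 ^ M1f n" .
  moreover have "real n powr (1/4) > 0" using n by simp
  ultimately show "1 / 2^(M1f n) \<le> 2 / real n powr (1/4)"
    by (simp add: divide_simps)
qed

lemma small_term_lim:
  assumes C: "C \<ge> 0"
  shows "(\<lambda>n. 12 * (C+1) * ln (real n) / 2^(M1f n)) \<longlonglongrightarrow> 0"
proof (rule tendsto_sandwich[of "\<lambda>_. 0" _ _ "\<lambda>n. 24 * (C+1) * (ln (real n) / real n powr (1/4))"])
  show "eventually (\<lambda>n. 0 \<le> 12 * (C+1) * ln (real n) / 2^(M1f n)) sequentially"
    using C by (intro eventually_sequentiallyI[of 1]) auto
  show "eventually (\<lambda>n. 12 * (C+1) * ln (real n) / 2^(M1f n) \<le> 24 * (C+1) * (ln (real n) / real n powr (1/4))) sequentially"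
  proof (intro eventually_sequentiallyI[of 1])
    fix n :: nat assume n: "n \<ge> 1"
    have "12 * (C+1) * ln (real n) / 2^(M1f n) = (12 * (C+1) * ln (real n)) * (1 / 2^(M1f n))" by simp
    also have "\<dots> \<le> (12 * (C+1) * ln (real n)) * (2 / real n powr (1/4))"
      using M1f_props(2)[of n] n C by (intro mult_left_mono) auto
    also have "\<dots> = 24 * (C+1) * (ln (real n) / real n powr (1/4))" by simp
    finally show "12 * (C+1) * ln (real n) / 2^(M1f n) \<le> 24 * (C+1) * (ln (real n) / real n powr (1/4))" .
  qed
  have "(\<lambda>n::nat. ln (real n) / real n powr (1/4)) \<longlonglongrightarrow> 0" by real_asymp
  then show "(\<lambda>n. 24 * (C+1) * (ln (real n) / real n powr (1/4))) \<longlonglongrightarrow> 0"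
    by (intro tendsto_mult_right_zero)
qed simp

lemma diagonal:
  fixes G :: "nat \<Rightarrow> nat \<Rightarrow> bool"
  assumes ev: "\<And>Q. eventually (\<lambda>n. G Q n) sequentially"
  shows "\<exists>q. filterlim q at_top sequentially \<and> eventually (\<lambda>n. G (q n) n) sequentially"
proof -
  have "\<forall>Q. \<exists>N. \<forall>n\<ge>N. G Q n" using ev by (simp add: eventually_sequentially)
  then obtain N where N: "\<And>Q n. n \<ge> N Q \<Longrightarrow> G Q n" by metis
  define S where "S n = {Q. Q \<le> n \<and> (\<forall>Q'\<le>Q. N Q' \<le> n)}" for n
  define q where "q n = Max (S n)" for n
  have finS: "finite (S n)" for n unfolding S_def by simp
  have inS: "K \<in> S n" if "K \<le> n" "\<forall>Q'\<le>K. N Q' \<le> n" for K n using that by (simp add: S_def)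
  show ?thesis
  proof (intro exI conjI)
    show "eventually (\<lambda>n. G (q n) n) sequentially"
    proof (intro eventually_sequentiallyI[of "N 0"])
      fix n assume "n \<ge> N 0"
      then have "0 \<in> S n" by (intro inS) auto
      then have "q n \<in> S n" unfolding q_def using finS by (intro Max_in) auto
      then show "G (q n) n" by (intro N) (auto simp: S_def)
    qed
    show "filterlim q at_top sequentially"
    proof (subst filterlim_at_top, intro allI)
      fix K
      define L where "L = max K (Max (N ` {..K}))"
      show "eventually (\<lambda>n. K \<le> q n) sequentially"
      proof (intro eventually_sequentiallyI[of L])
        fix n assume n: "n \<ge> L"
        have "K \<in> S n"
        proof (intro inS)
          show "K \<le> n" using n by (simp add: L_def)
          show "\<forall>Q'\<le>K. N Q' \<le> n"
          proof (intro allI impI)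
            fix Q' assume "Q' \<le> K"
            then have "N Q' \<le> Max (N ` {..K})" by (intro Max_ge) auto
            moreover have "Max (N ` {..K}) \<le> n" using n by (simp add: L_def)
            ultimately show "N Q' \<le> n" by linarith
          qed
        qed
        then show "K \<le> q n" unfolding q_def using finS by (intro Max_ge) auto
      qed
    qed
  qed
qed


context setting begin

lemma m0_exists:
  assumes e: "e > 0"
  shows "\<exists>m0::nat. 3 * (C+1) * ln 2 * (real m0 + 2) / 2^m0 < e"
proof -
  have "(\<lambda>m::nat. (real m + 2) / 2^m) \<longlonglongrightarrow> 0" by real_asymp
  then have "(\<lambda>m::nat. 3 * (C+1) * ln 2 * ((real m + 2) / 2^m)) \<longlonglongrightarrow> 0"
    by (intro tendsto_mult_right_zero)
  from order_tendstoD(2)[OF this e] obtain m0 where "3 * (C+1) * ln 2 * ((real m0 + 2) / 2^m0) < e"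
    by (auto simp: eventually_sequentially)
  then show ?thesis by auto
qed

lemma det_A1:
  assumes in01: "\<forall>k. x k \<in> {0..1}"
  and polyc: "\<forall>rs. (\<lambda>n. (1 / real (card (blockA n))) * (\<Sum>k\<in>blockA n. polyr rs (x k))) \<longlonglongrightarrow> (\<integral>y. \<rho> y * polyr rs y \<partial>lborel)"
  and rpos: "AE y in lborel. y \<in> {0..1} \<longrightarrow> \<rho> y > 0"
  shows "assumptionA1 x"
  unfolding assumptionA1_def
proof (intro exI[of _ \<rho>] conjI allI impI)
  have "integrable lborel (\<lambda>y. \<rho> y * indicator {0..1} y)"
    by (rule integrable_rho_g(1)[where B=1]) (auto split: split_indicator)
  then show "set_integrable lborel {0..1} \<rho>"
    unfolding set_integrable_def by (simp add: mult.commute)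
  show "AE y in lborel. y \<in> {0..1} \<longrightarrow> 0 < \<rho> y" by (rule rpos)
  fix f :: "real \<Rightarrow> real" assume f: "continuous_on {0..1} f"
  define F where "F y = f (max 0 (min 1 y))" for y
  have cl: "continuous_on UNIV (\<lambda>y::real. max 0 (min 1 y))" by (intro continuous_intros)
  have Fc: "continuous_on UNIV F" unfolding F_def
    by (rule continuous_on_compose2[OF f cl]) auto
  have Fx: "F (x k) = f (x k)" for k using in01 by (auto simp: F_def)
  have lim: "(\<lambda>n. (1 / real (card (blockA n))) * (\<Sum>k\<in>blockA n. F (x k))) \<longlonglongrightarrow> (\<integral>y. \<rho> y * F y \<partial>lborel)"
    by (rule A1_det[OF _ _ Fc]) (use in01 polyc in auto)
  have eqf: "(\<lambda>y. \<rho> y * F y) = (\<lambda>y. indicator {0..1} y *\<^sub>R (f y * \<rho> y))"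
  proof
    fix y :: real show "\<rho> y * F y = indicator {0..1} y *\<^sub>R (f y * \<rho> y)"
    proof (cases "y \<in> {0..1}")
      case True then show ?thesis by (auto simp: F_def)
    qed (simp add: rho_out)
  qed
  show "(\<lambda>n. (1 / real (card (blockA n))) * (\<Sum>k\<in>blockA n. f (x k))) \<longlonglongrightarrow> (LINT y:{0..1}|lborel. f y * \<rho> y)"
    using lim unfolding Fx eqf set_lebesgue_integral_def .
qed


end

context setting begin
lemma det_A23:
  assumes lam: "lam > 0"
  and disc: "eventually (\<lambda>n. discOK C x n) sequentially"
  and gap: "\<forall>Q. eventually (\<lambda>n. gapOK x Q n) sequentially"
  shows "\<exists>q. filterlim q at_top sequentially \<and> assumptionA2 q x \<and> assumptionA3 q x (\<lambda>k. exp (- lam * real k))"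
proof -
  have "\<forall>m::nat. \<exists>m0::nat. 3 * (C+1) * ln 2 * (real m0 + 2) / 2^m0 < 1 / (2 * (real m + 1))"
    by (intro allI m0_exists) auto
  then obtain m0f where m0f: "\<And>m. 3 * (C+1) * ln 2 * (real (m0f m) + 2) / 2^(m0f m) < 1 / (2 * (real m + 1))"
    by metis
  define G where "G Q n \<longleftrightarrow> n > 0 \<and> gapOK x Q n \<and> (\<forall>b\<le>Q. discOK C x (2^b*n)) \<and>
      12 * (C+1) * ln (real n) / 2^(M1f n) < 1 / (2 * (real Q + 1)) \<and>
      real n ^ 4 * exp (- lam * real n) < 1 / (real Q + 1)" for Q n
  have evG: "eventually (\<lambda>n. G Q n) sequentially" for Q
  proof -
    obtain N0 where N0: "\<And>n. n \<ge> N0 \<Longrightarrow> discOK C x n" using disc by (auto simp: eventually_sequentially)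
    have e1: "eventually (\<lambda>n. \<forall>b\<le>Q. discOK C x (2^b*n)) sequentially"
    proof (intro eventually_sequentiallyI[of N0] allI impI)
      fix n b assume "n \<ge> N0"
      moreover have "n \<le> 2^b*n" by simp
      ultimately show "discOK C x (2^b*n)" by (intro N0) linarith
    qed
    have e2: "eventually (\<lambda>n. 12 * (C+1) * ln (real n) / 2^(M1f n) < 1 / (2 * (real Q + 1))) sequentially"
      by (rule order_tendstoD(2)[OF small_term_lim[OF C_nn]]) auto
    have "(\<lambda>n::nat. real n ^ 4 * exp (- lam * real n)) \<longlonglongrightarrow> 0" using lam by real_asymp
    then have e3: "eventually (\<lambda>n. real n ^ 4 * exp (- lam * real n) < 1 / (real Q + 1)) sequentially"
      by (rule order_tendstoD(2)) auto
    have e0: "eventually (\<lambda>n. n > (0::nat)) sequentially" by (rule eventually_gt_at_top)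
    show ?thesis using e0 gap[rule_format, of Q] e1 e2 e3 unfolding G_def by eventually_elim (intro conjI)
  qed
  obtain q where q: "filterlim q at_top sequentially" and qG: "eventually (\<lambda>n. G (q n) n) sequentially"
    using diagonal[of G, OF evG] by (elim exE conjE)
  have pickm: "\<exists>m::nat. 1 / (real m + 1) < e" if "e > 0" for e :: real
  proof -
    from reals_Archimedean[OF that] obtain m where m: "inverse (real (Suc m)) < e" ..
    have eq: "1 / (real m + 1) = inverse (real (Suc m))" by (simp add: inverse_eq_divide add.commute)
    show ?thesis
    proof (intro exI[of _ m])
      show "1 / (real m + 1) < e" unfolding eq by (rule m)
    qed
  qed
  have A2: "assumptionA2 q x"
    unfolding assumptionA2_def
  proof (intro allI impI)
    fix e :: real assume e: "e > 0"
    obtain m :: nat where m: "1 / (real m + 1) < e" using pickm[OF e] by blast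
    have qm: "eventually (\<lambda>n. m \<le> q n) sequentially" using q by (simp add: filterlim_at_top)
    show "\<exists>\<delta>>0. \<forall>\<^sub>F n in sequentially. \<forall>n'\<in>{2^j * n | j. j \<le> q n}. \<forall>n''\<in>{2^j * n | j. j \<le> q n}.
          (1 / real (card (blockA n' \<times> blockA n''))) *
            (\<Sum>(i,j)\<in>{(i,j). i \<in> blockA n' \<and> j \<in> blockA n'' \<and> i \<noteq> j \<and> \<bar>x i - x j\<bar> < \<delta>}.
               - ln \<bar>x i - x j\<bar>) < e"
    proof (intro exI[of _ "1 / 2^(m0f m)"] conjI)
      show "(0::real) < 1 / 2^(m0f m)" by simp
      show "\<forall>\<^sub>F n in sequentially. \<forall>n'\<in>{2^j * n | j. j \<le> q n}. \<forall>n''\<in>{2^j * n | j. j \<le> q n}.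
          (1 / real (card (blockA n' \<times> blockA n''))) *
            (\<Sum>(i,j)\<in>{(i,j). i \<in> blockA n' \<and> j \<in> blockA n'' \<and> i \<noteq> j \<and> \<bar>x i - x j\<bar> < 1 / 2^(m0f m)}.
               - ln \<bar>x i - x j\<bar>) < e"
        using qm qG
      proof eventually_elim
        case (elim n)
        then have Gn: "G (q n) n" and mq: "m \<le> q n" by auto
        show ?case
        proof (intro ballI)
          fix n' n'' assume n': "n' \<in> {2^j * n | j. j \<le> q n}" and n'': "n'' \<in> {2^j * n | j. j \<le> q n}"
          then obtain a b where a: "a \<le> q n" "n' = 2^a * n" and b: "b \<le> q n" "n'' = 2^b * n" by blast
          have n0: "n > 0" and g: "gapOK x (q n) n" and d: "discOK C x (2^b*n)"
            and s1: "12 * (C+1) * ln (real n) / 2^(M1f n) < 1 / (2 * (real (q n) + 1))"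
            using Gn b unfolding G_def by auto
          have "(1 / real (card (blockA n' \<times> blockA n''))) *
            (\<Sum>(i,j)\<in>{(i,j). i \<in> blockA n' \<and> j \<in> blockA n'' \<and> i \<noteq> j \<and> \<bar>x i - x j\<bar> < 1 / 2^(m0f m)}.
               - ln \<bar>x i - x j\<bar>) \<le> 12 * (C+1) * ln (real n) / 2^(M1f n) + 3 * (C+1) * ln 2 * (real (m0f m) + 2) / 2^(m0f m)"
            unfolding a(2) b(2) by (rule A2_bound[OF C_nn n0 a(1) b(1) g d M1f_props(1)[OF n0]])
          also have "\<dots> < 1 / (2 * (real (q n) + 1)) + 1 / (2 * (real m + 1))"
            using s1 m0f[of m] by linarith
          also have "\<dots> \<le> 1 / (2 * (real m + 1)) + 1 / (2 * (real m + 1))"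
            using mq by (intro add_mono divide_left_mono mult_left_mono) auto
          also have "\<dots> = 1 / (real m + 1)" by (simp add: field_simps)
          also have "\<dots> < e" by (rule m)
          finally show "(1 / real (card (blockA n' \<times> blockA n''))) *
            (\<Sum>(i,j)\<in>{(i,j). i \<in> blockA n' \<and> j \<in> blockA n'' \<and> i \<noteq> j \<and> \<bar>x i - x j\<bar> < 1 / 2^(m0f m)}.
               - ln \<bar>x i - x j\<bar>) < e" .
        qed
      qed
    qed
  qed
  have A3: "assumptionA3 q x (\<lambda>k. exp (- lam * real k))"
    unfolding assumptionA3_def
  proof (intro allI impI)
    fix e :: real assume e: "e > 0"
    obtain m :: nat where m: "1 / (real m + 1) < e" using pickm[OF e] by blast
    have qm: "eventually (\<lambda>n. m \<le> q n) sequentially" using q by (simp add: filterlim_at_top)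
    show "\<forall>\<^sub>F n in sequentially. \<forall>i\<in>blockAq n (q n). \<forall>j\<in>blockAq n (q n). i \<noteq> j \<longrightarrow>
          (exp (- lam * real i) + exp (- lam * real j)) / (2 * \<bar>x i - x j\<bar>) < e"
      using qm qG
    proof eventually_elim
      case (elim n)
      then have Gn: "G (q n) n" and mq: "m \<le> q n" by auto
      have n0: "n > 0" and g: "gapOK x (q n) n" and s: "real n ^ 4 * exp (- lam * real n) < 1 / (real (q n) + 1)"
        using Gn unfolding G_def by auto
      show ?case
      proof (intro ballI impI)
        fix i j assume i: "i \<in> blockAq n (q n)" and j: "j \<in> blockAq n (q n)" and ij: "i \<noteq> j"
        have "(exp (- lam * real i) + exp (- lam * real j)) / (2 * \<bar>x i - x j\<bar>) \<le> real n ^ 4 * exp (- lam * real n)"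
          by (rule A3_bound[OF lam n0 g i j ij])
        also have "\<dots> < 1 / (real (q n) + 1)" by (rule s)
        also have "\<dots> \<le> 1 / (real m + 1)" using mq by (intro divide_left_mono) auto
        also have "\<dots> < e" by (rule m)
        finally show "(exp (- lam * real i) + exp (- lam * real j)) / (2 * \<bar>x i - x j\<bar>) < e" .
      qed
    qed
  qed
  show ?thesis using q A2 A3 by (intro exI[of _ q] conjI)
qed


lemma main_setting:
  assumes lam: "lam > 0" and rpos: "AE x in lborel. x \<in> {0..1} \<longrightarrow> \<rho> x > 0"
  shows "AE \<omega> in M.
           assumptionA1 (\<lambda>k. c k \<omega>) \<and>
           (\<exists>q::nat \<Rightarrow> nat. filterlim q at_top sequentially \<and>
              assumptionA2 q (\<lambda>k. c k \<omega>) \<and>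
              assumptionA3 q (\<lambda>k. c k \<omega>) (\<lambda>k. exp (- lam * real k)))"
proof -
  have gapall: "AE \<omega> in M. \<forall>Q. eventually (\<lambda>n. gapOK (\<lambda>k. c k \<omega>) Q n) sequentially"
    using gap_AE by (simp add: AE_all_countable)
  from AE_c_in01 poly_AE disc_AE gapall show ?thesis
  proof eventually_elim
    case (elim \<omega>)
    have a1: "assumptionA1 (\<lambda>k. c k \<omega>)" by (rule det_A1[OF elim(1) elim(2) rpos])
    have a23: "\<exists>q. filterlim q at_top sequentially \<and> assumptionA2 q (\<lambda>k. c k \<omega>) \<and> assumptionA3 q (\<lambda>k. c k \<omega>) (\<lambda>k. exp (- lam * real k))"
      by (rule det_A23[OF lam elim(3) elim(4)])
    show ?case using a1 a23 by (intro conjI)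
  qed
qed

end

theorem theorem1p9:
  fixes M :: "'a measure" and c :: "nat \<Rightarrow> 'a \<Rightarrow> real"
    and \<rho> :: "real \<Rightarrow> real" and lam :: real
  assumes "prob_space M"
    and "lam > 0"
    and "\<And>k. c k \<in> borel_measurable M"
    and "prob_space.indep_vars M (\<lambda>_. borel) c UNIV"
    and "\<rho> \<in> borel_measurable borel"
    and "\<And>x. \<rho> x \<ge> 0"
    and "\<And>x. x \<notin> {0..1} \<Longrightarrow> \<rho> x = 0"
    and "AE x in lborel. x \<in> {0..1} \<longrightarrow> \<rho> x > 0"
    and "\<exists>C. \<forall>x. \<rho> x \<le> C"
    and "\<And>k. distributed M lborel (c k) (\<lambda>x. ennreal (\<rho> x))"
  shows "AE \<omega> in M.
           assumptionA1 (\<lambda>k. c k \<omega>) \<and>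
           (\<exists>q::nat \<Rightarrow> nat. filterlim q at_top sequentially \<and>
              assumptionA2 q (\<lambda>k. c k \<omega>) \<and>
              assumptionA3 q (\<lambda>k. c k \<omega>) (\<lambda>k. exp (- lam * real k)))"
proof -
  obtain C where C: "\<And>x. \<rho> x \<le> C" using assms(9) by blast
  have st: "setting M c \<rho> C"
  proof (rule setting.intro[OF assms(1)], rule setting_axioms.intro)
    show "\<And>k. c k \<in> borel_measurable M" by (rule assms(3))
    show "prob_space.indep_vars M (\<lambda>_. borel) c UNIV" by (rule assms(4))
    show "\<rho> \<in> borel_measurable borel" by (rule assms(5))
    show "\<And>x. \<rho> x \<ge> 0" by (rule assms(6))
    show "\<And>x. x \<notin> {0..1} \<Longrightarrow> \<rho> x = 0" by (rule assms(7))
    show "\<And>x. \<rho> x \<le> C" by (rule C)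
    show "\<And>k. distributed M lborel (c k) (\<lambda>x. ennreal (\<rho> x))" by (rule assms(10))
  qed
  interpret setting M c \<rho> C by (rule st)
  show ?thesis by (rule main_setting[OF assms(2) assms(8)])
qed

end
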